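(* Let $G$ be a connected weighted multigraph on the vertex set $V$, $|V|=n\ge2$, with positive edge weights. Then the long walk distance $d^{LW}$ on $V$ is graph-geodetic, i.e. for all $i,j,k\in V$, $d^{LW}(i,j)+d^{LW}(j,k)=d^{LW}(i,k)$ holds if and only if every path in $G$ connecting $i$ and $k$ contains $j$; and it is a squared Euclidean distance, i.e. there exist points $x_v\in\mathbb R^m$ ($v\in V$, some $m$) with $d^{LW}(i,j)=\|x_i-x_j\|_2^2$ for all $i,j\in V$.
   Context: Loops and multiple edges are allowed. The weighted adjacency matrix $A=(a_{ij})$ has $a_{ij}$ equal to the sum of weights of the edges joining $i$ and $j$; $\rho$ is its spectral radius. The long walk distance is $d^{LW}(i,j)=\lim_{\alpha\to\infty}\theta\bigl(\tfrac12(\ln r_{ii}+\ln r_{jj})-\ln r_{ij}\bigr)$, where $(r_{ij})=(I-tA)^{-1}$, $t=(\rho+\alpha^{-1})^{-1}$, $\theta=\ln(e+\alpha^{2/n})\frac{\alpha-1}{\ln\alpha}$. *)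

theory Defs
  imports "HOL-Analysis.Analysis"
begin

text \<open>A weighted multigraph on the vertex type 'n: a finite set E of edges, each edge e
  having a nonempty set ends e of at most two endpoints (one endpoint = loop), and a
  weight w e.\<close>

definition wmultigraph :: "'e set \<Rightarrow> ('e \<Rightarrow> 'n set) \<Rightarrow> ('e \<Rightarrow> real) \<Rightarrow> bool" where
  "wmultigraph E ends w \<longleftrightarrow> finite E \<and>
     (\<forall>e\<in>E. ends e \<noteq> {} \<and> finite (ends e) \<and> card (ends e) \<le> 2 \<and> w e > 0)"

definition wadj :: "'e set \<Rightarrow> ('e \<Rightarrow> 'n::finite set) \<Rightarrow> ('e \<Rightarrow> real) \<Rightarrow> real^'n^'n" where
  "wadj E ends w = (\<chi> i j. \<Sum>e\<in>{e\<in>E. ends e = {i, j}}. w e)"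

definition adjacent :: "'e set \<Rightarrow> ('e \<Rightarrow> 'n set) \<Rightarrow> 'n \<Rightarrow> 'n \<Rightarrow> bool" where
  "adjacent E ends u v \<longleftrightarrow> (\<exists>e\<in>E. ends e = {u, v})"

definition is_path :: "'e set \<Rightarrow> ('e \<Rightarrow> 'n set) \<Rightarrow> 'n list \<Rightarrow> 'n \<Rightarrow> 'n \<Rightarrow> bool" where
  "is_path E ends p i k \<longleftrightarrow> p \<noteq> [] \<and> hd p = i \<and> last p = k \<and> distinct p \<and>
     (\<forall>l. Suc l < length p \<longrightarrow> adjacent E ends (p ! l) (p ! Suc l))"

definition connected_graph :: "'e set \<Rightarrow> ('e \<Rightarrow> 'n set) \<Rightarrow> bool" where
  "connected_graph E ends \<longleftrightarrow> (\<forall>i k. \<exists>p. is_path E ends p i k)"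

definition spec_radius :: "real^'n::finite^'n \<Rightarrow> real" where
  "spec_radius A = Max {cmod z | z. det (mat z - (\<chi> i j. complex_of_real (A $ i $ j))) = 0}"

definition lw_t :: "real^'n::finite^'n \<Rightarrow> real \<Rightarrow> real" where
  "lw_t A \<alpha> = inverse (spec_radius A + inverse \<alpha>)"

definition lw_r :: "real^'n::finite^'n \<Rightarrow> real \<Rightarrow> real^'n^'n" where
  "lw_r A \<alpha> = matrix_inv (mat 1 - lw_t A \<alpha> *\<^sub>R A)"

definition lw_theta :: "nat \<Rightarrow> real \<Rightarrow> real" where
  "lw_theta n \<alpha> = ln (exp 1 + \<alpha> powr (2 / real n)) * (\<alpha> - 1) / ln \<alpha>"

definition lw_expr :: "real^'n::finite^'n \<Rightarrow> 'n \<Rightarrow> 'n \<Rightarrow> real \<Rightarrow> real" where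
  "lw_expr A i j \<alpha> = lw_theta CARD('n) \<alpha> *
     ((ln (lw_r A \<alpha> $ i $ i) + ln (lw_r A \<alpha> $ j $ j)) / 2 - ln (lw_r A \<alpha> $ i $ j))"

definition dLW :: "real^'n::finite^'n \<Rightarrow> 'n \<Rightarrow> 'n \<Rightarrow> real" where
  "dLW A i j = Lim at_top (lw_expr A i j)"

end

theory Submission
  imports Defs "HOL-Real_Asymp.Real_Asymp"
begin


lemma path_nth_prop:
  assumes p: "is_path E ends p a b" and Pa: "P a"
    and step: "\<And>x y. x \<in> set p \<Longrightarrow> y \<in> set p \<Longrightarrow> P x \<Longrightarrow> adjacent E ends x y \<Longrightarrow> P y"
  shows "P b"
proof -
  from p have ne: "p \<noteq> []" and hd: "hd p = a" and lst: "last p = b"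
    and adj: "\<And>l. Suc l < length p \<Longrightarrow> adjacent E ends (p ! l) (p ! Suc l)"
    unfolding is_path_def by auto
  have "\<forall>l. l < length p \<longrightarrow> P (p ! l)"
  proof
    fix l show "l < length p \<longrightarrow> P (p ! l)"
    proof (induction l)
      case 0 then show ?case using ne hd Pa by (simp add: hd_conv_nth)
    next
      case (Suc l)
      show ?case
      proof
        assume "Suc l < length p"
        then show "P (p ! Suc l)"
          using Suc adj[of l] step[of "p ! l" "p ! Suc l"] by auto
      qed
    qed
  qed
  moreover have "length p - 1 < length p" using ne by simp
  ultimately show ?thesis using ne lst by (metis last_conv_nth)
qed

locale lw =
  fixes E :: "'e set" and ends :: "'e \<Rightarrow> 'n::finite set" and w :: "'e \<Rightarrow> real"
  assumes wmg: "wmultigraph E ends w" and conn: "connected_graph E ends"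
    and card2: "CARD('n) \<ge> 2"
begin

abbreviation "A \<equiv> wadj E ends w"

lemma A_sym: "A $ i $ j = A $ j $ i"
proof -
  have "{i, j} = {j, i}" by blast
  then show ?thesis by (simp add: wadj_def)
qed

lemma A_nonneg: "A $ i $ j \<ge> 0"
proof -
  have "\<forall>e\<in>E. w e > 0" using wmg unfolding wmultigraph_def by blast
  then show ?thesis unfolding wadj_def vec_lambda_beta by (intro sum_nonneg) (simp add: less_imp_le)
qed

lemma A_pos_iff: "A $ i $ j > 0 \<longleftrightarrow> adjacent E ends i j"
proof -
  have fin: "finite {e\<in>E. ends e = {i, j}}" using wmg unfolding wmultigraph_def by auto
  show ?thesis
  proof
    assume "A $ i $ j > 0"
    show "adjacent E ends i j"
    proof (rule ccontr)
      assume "\<not> adjacent E ends i j"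
      then have "{e\<in>E. ends e = {i, j}} = {}" unfolding adjacent_def by auto
      then have "A $ i $ j = sum w {}" unfolding wadj_def vec_lambda_beta by (simp only:)
      then have "A $ i $ j = 0" by simp
      then show False using \<open>A $ i $ j > 0\<close> by simp
    qed
  next
    assume "adjacent E ends i j"
    then have "{e\<in>E. ends e = {i, j}} \<noteq> {}" unfolding adjacent_def by blast
    moreover have "\<forall>e\<in>E. w e > 0" using wmg unfolding wmultigraph_def by blast
    ultimately show "A $ i $ j > 0" unfolding wadj_def vec_lambda_beta using fin
      by (intro sum_pos) auto
  qed
qed

lemma conn_prop:
  assumes "P a" and "\<And>x y. P x \<Longrightarrow> A $ x $ y > 0 \<Longrightarrow> P y"
  shows "P b"
proof -
  obtain p where "is_path E ends p a b" using conn unfolding connected_graph_def by blast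
  then show ?thesis using path_nth_prop[of E ends p a b P] assms A_pos_iff by blast
qed

lemma exists_two: "\<exists>a b::'n. a \<noteq> b"
proof (rule ccontr)
  assume "\<not> ?thesis"
  then have "\<forall>a b::'n. a = b" by blast
  then have "CARD('n) \<le> Suc 0" by (subst card_le_Suc0_iff_eq) auto
  then show False using card2 by simp
qed

lemma exists_edge: "\<exists>a b. A $ a $ b > 0"
proof -
  obtain a b :: 'n where ab: "a \<noteq> b" using exists_two by blast
  obtain p where p: "is_path E ends p a b" using conn unfolding connected_graph_def by blast
  then have ne: "p \<noteq> []" and "hd p = a" "last p = b" unfolding is_path_def by auto
  with ab have "length p \<noteq> 1" by (cases p) auto
  with ne have "Suc 0 < length p" by (cases p) auto
  then have "adjacent E ends (p!0) (p!Suc 0)" using p unfolding is_path_def by auto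
  then show ?thesis using A_pos_iff by blast
qed

definition qf :: "real^'n \<Rightarrow> real" where "qf x = x \<bullet> (A *v x)"

lemma inner_Av: "x \<bullet> (A *v y) = (\<Sum>i\<in>UNIV. \<Sum>j\<in>UNIV. x$i * A$i$j * y$j)"
  by (simp add: inner_vec_def matrix_vector_mult_def sum_distrib_left mult.assoc)

lemma sym_inner: "x \<bullet> (A *v y) = y \<bullet> (A *v x)"
proof -
  have "x \<bullet> (A *v y) = (\<Sum>j\<in>UNIV. \<Sum>i\<in>UNIV. x$i * A$i$j * y$j)"
    unfolding inner_Av by (rule sum.swap)
  also have "\<dots> = y \<bullet> (A *v x)" unfolding inner_Av
    by (intro sum.cong refl) (simp add: A_sym[of j i for i j] mult_ac)
  finally show ?thesis .
qed

lemma Av_comp: "(A *v x) $ i = (\<Sum>j\<in>UNIV. A$i$j * x$j)"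
  by (simp add: matrix_vector_mult_def)

end


context lw begin

lemma qf_scale: "qf (c *\<^sub>R y) = c^2 * qf y"
  unfolding qf_def by (simp add: matrix_vector_mult_scaleR power2_eq_square)

lemma qf_0[simp]: "qf 0 = 0" unfolding qf_def by simp

lemma max_eigen:
  assumes bd: "\<forall>y. qf y \<le> r * (y \<bullet> y)" and eq: "qf v = r * (v \<bullet> v)"
  shows "A *v v = r *\<^sub>R v"
proof -
  define g where "g = A *v v - r *\<^sub>R v"
  define G where "G = g \<bullet> g"
  define c where "c = qf g - r * G"
  have key: "2*t*G + t^2 * c \<le> 0" for t
  proof -
    have le: "qf (v + t *\<^sub>R g) \<le> r * ((v + t *\<^sub>R g) \<bullet> (v + t *\<^sub>R g))" using bd by blast
    have e1: "qf (v + t *\<^sub>R g) = qf v + 2*t*(g \<bullet> (A *v v)) + t^2 * qf g"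
      using sym_inner[of v g]
      unfolding qf_def by (simp add: matrix_vector_right_distrib matrix_vector_mult_scaleR
          inner_add_left inner_add_right power2_eq_square algebra_simps)
    have e2: "(v + t *\<^sub>R g) \<bullet> (v + t *\<^sub>R g) = v \<bullet> v + 2*t*(g \<bullet> v) + t^2 * G"
      unfolding G_def by (simp add: inner_add_left inner_add_right power2_eq_square algebra_simps inner_commute)
    have e3: "g \<bullet> (A *v v) = G + r * (g \<bullet> v)"
      unfolding G_def by (simp add: g_def inner_diff_right)
    have "2*t*G + t^2 * c = qf (v + t *\<^sub>R g) - r * ((v + t *\<^sub>R g) \<bullet> (v + t *\<^sub>R g))"
      unfolding e1 e2 e3 eq c_def by (simp add: algebra_simps power2_eq_square)
    then show ?thesis using le by simp
  qed
  have "G = 0"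
  proof (rule ccontr)
    assume "G \<noteq> 0"
    then have Gp: "G > 0" unfolding G_def by (simp add: order_le_neq_trans)
    define t where "t = G / (\<bar>c\<bar> + 1)"
    have tp: "t > 0" using Gp by (simp add: t_def)
    have h1: "t * \<bar>c\<bar> < G" using Gp unfolding t_def by (simp add: field_simps)
    have h2: "t^2 * \<bar>c\<bar> < t * G" using mult_strict_left_mono[OF h1 tp]
      by (simp add: power2_eq_square mult.assoc)
    have h3: "- (t^2 * \<bar>c\<bar>) \<le> t^2 * c"
      using mult_left_mono[of "- \<bar>c\<bar>" c "t^2"] by simp
    have "t * G > 0" using tp Gp by simp
    then have "2*t*G + t^2 * c > 0" using h2 h3 by linarith
    then show False using key[of t] by simp
  qed
  then show ?thesis unfolding G_def g_def by simp
qed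

lemma perron_exists:
  "\<exists>u \<rho>. (\<forall>a. u$a > 0) \<and> u \<bullet> u = 1 \<and> A *v u = \<rho> *\<^sub>R u \<and> \<rho> > 0 \<and> (\<forall>x. qf x \<le> \<rho> * (x \<bullet> x))"
proof -
  have cont: "continuous_on (sphere (0::real^'n) 1) qf" unfolding qf_def by (intro continuous_intros)
  have ne: "sphere (0::real^'n) 1 \<noteq> {}" by simp
  obtain x where xs: "x \<in> sphere (0::real^'n) 1" and xmax: "\<forall>y\<in>sphere 0 1. qf y \<le> qf x"
    using continuous_attains_sup[OF compact_sphere ne cont] by blast
  define \<rho> where "\<rho> = qf x"
  have bound: "qf y \<le> \<rho> * (y \<bullet> y)" for y
  proof (cases "y = 0")
    case True then show ?thesis by simp
  next
    case False
    define c where "c = inverse (norm y)"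
    have "c *\<^sub>R y \<in> sphere 0 1" using False by (simp add: c_def)
    then have "c^2 * qf y \<le> \<rho>" using xmax qf_scale unfolding \<rho>_def by metis
    moreover have "c^2 * (y \<bullet> y) = 1" using False unfolding c_def
      by (simp add: power2_norm_eq_inner[symmetric] field_simps)
    moreover have "c^2 > 0" using False by (simp add: c_def)
    ultimately show ?thesis
      by (metis mult.left_commute mult.right_neutral mult_le_cancel_left_pos)
  qed
  define v where "v = (\<chi> i. \<bar>x$i\<bar>)"
  have xx: "x \<bullet> x = 1" using xs by (simp add: power2_norm_eq_inner[symmetric])
  have vv: "v \<bullet> v = 1" using xx unfolding v_def inner_vec_def by (simp add: abs_mult_self_eq)
  have "qf x \<le> qf v" unfolding qf_def inner_Av v_def
  proof (intro sum_mono)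
    fix i j
    show "x$i * A$i$j * x$j \<le> (\<chi> i. \<bar>x$i\<bar>)$i * A$i$j * (\<chi> i. \<bar>x$i\<bar>)$j"
      using A_nonneg[of i j] by (simp add: abs_mult[symmetric] abs_mult_pos)
  qed
  then have qv: "qf v = \<rho> * (v \<bullet> v)" using bound[of v] vv unfolding \<rho>_def by simp
  have ev: "A *v v = \<rho> *\<^sub>R v" using max_eigen[OF _ qv] bound by blast
  have vnn: "v$a \<ge> 0" for a unfolding v_def by simp
  have vpos: "v$a > 0" for a
  proof (rule ccontr)
    assume "\<not> v$a > 0"
    then have va: "v$a = 0" using vnn[of a] by simp
    have "v$b = 0" for b
    proof (rule conn_prop[of "\<lambda>z. v$z = 0" a b])
      show "v$a = 0" by fact
    next
      fix z y assume vz: "v$z = 0" and Azy: "A$z$y > 0"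
      have "(A *v v)$z = 0" using ev vz by simp
      then have s0: "(\<Sum>j\<in>UNIV. A$z$j * v$j) = 0" by (simp add: Av_comp)
      have nn: "0 \<le> A$z$j * v$j" for j using A_nonneg vnn by (simp add: mult_nonneg_nonneg)
      have "(\<Sum>j\<in>UNIV. A$z$j * v$j) = 0 \<longleftrightarrow> (\<forall>j\<in>UNIV. A$z$j * v$j = 0)"
        by (intro sum_nonneg_eq_0_iff) (simp_all add: nn)
      then have "\<forall>j\<in>UNIV. A$z$j * v$j = 0" using s0 by blast
      then have "A$z$y * v$y = 0" by blast
      then show "v$y = 0" using Azy by simp
    qed
    then have "v = 0" by (simp add: vec_eq_iff)
    then show False using vv by simp
  qed
  have rpos: "\<rho> > 0"
  proof -
    obtain a b where ab: "A$a$b > 0" using exists_edge by blast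
    have nn3: "0 \<le> v$i * A$i$j * v$j" for i j using A_nonneg[of i j] vnn[of i] vnn[of j] by simp
    have nn2: "0 \<le> (\<Sum>j\<in>UNIV. v$i * A$i$j * v$j)" for i using nn3 by (simp add: sum_nonneg)
    have "\<rho> = (\<Sum>i\<in>UNIV. \<Sum>j\<in>UNIV. v$i * A$i$j * v$j)" using qv vv unfolding qf_def inner_Av by simp
    also have "\<dots> \<ge> (\<Sum>j\<in>UNIV. v$a * A$a$j * v$j)"
      by (rule member_le_sum) (simp_all add: nn2 nn3)
    also have "(\<Sum>j\<in>UNIV. v$a * A$a$j * v$j) \<ge> v$a * A$a$b * v$b"
      by (rule member_le_sum) (simp_all add: nn2 nn3)
    moreover have "v$a * A$a$b * v$b > 0" using ab vpos[of a] vpos[of b] by simp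
    ultimately show ?thesis by linarith
  qed
  show ?thesis using vpos vv ev rpos bound by blast
qed

end


context lw begin

definition PF :: "real^'n \<Rightarrow> real \<Rightarrow> bool" where
  "PF u r \<longleftrightarrow> (\<forall>a. u$a > 0) \<and> u \<bullet> u = 1 \<and> A *v u = r *\<^sub>R u \<and> r > 0 \<and> (\<forall>x. qf x \<le> r * (x \<bullet> x))"

definition uu :: "real^'n" where "uu = (SOME u. \<exists>r. PF u r)"
definition rho :: real where "rho = (SOME r. PF uu r)"

lemma PF_uu: "PF uu rho"
proof -
  have "\<exists>u r. PF u r" using perron_exists unfolding PF_def by blast
  then have "\<exists>r. PF uu r" unfolding uu_def by (rule someI_ex)
  then show ?thesis unfolding rho_def by (rule someI_ex)
qed

lemma u_pos: "uu$a > 0" and uu1: "uu \<bullet> uu = 1" and Au: "A *v uu = rho *\<^sub>R uu"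
  and rho_pos: "rho > 0" and qf_le: "qf x \<le> rho * (x \<bullet> x)"
  using PF_uu unfolding PF_def by blast+

lemma Au_comp: "(\<Sum>b\<in>UNIV. A$a$b * uu$b) = rho * uu$a"
proof -
  have "(A *v uu)$a = (rho *\<^sub>R uu)$a" using Au by simp
  then show ?thesis by (simp add: Av_comp)
qed

abbreviation "Ac \<equiv> (\<chi> i j. complex_of_real (A $ i $ j))"

lemma Mv_comp: "((mat z - Ac) *v v) $ a = z * v$a - (\<Sum>b\<in>UNIV. complex_of_real (A$a$b) * v$b)"
proof -
  have "((mat z - Ac) *v v) $ a = (\<Sum>b\<in>UNIV. (if a = b then z else 0) * v$b) - (\<Sum>b\<in>UNIV. complex_of_real (A$a$b) * v$b)"
    by (simp add: matrix_vector_mult_def mat_def left_diff_distrib sum_subtractf)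
  also have "(\<Sum>b\<in>UNIV. (if a = b then z else 0) * v$b) = (\<Sum>b\<in>UNIV. (if a = b then z * v$b else 0))"
    by (rule sum.cong) simp_all
  also have "\<dots> = z * v$a" by simp
  finally show ?thesis .
qed

lemma det0_eig:
  assumes "det (mat z - Ac) = 0"
  shows "\<exists>v. v \<noteq> 0 \<and> (\<forall>a. (\<Sum>b\<in>UNIV. complex_of_real (A$a$b) * v$b) = z * v$a)"
proof -
  let ?M = "mat z - Ac"
  have "det (matrix ((*v) ?M)) \<noteq> 0 \<longleftrightarrow> inj ((*v) ?M)"
    by (rule det_nz_iff_inj_gen[OF matrix_vector_mul_linear_gen])
  then have "\<not> inj ((*v) ?M)" using assms unfolding matrix_of_matrix_vector_mul by blast
  then obtain x y where xy: "x \<noteq> y" "?M *v x = ?M *v y" unfolding inj_def by blast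
  define v where "v = x - y"
  have "?M *v v = 0" using xy by (simp add: v_def matrix_vector_mult_diff_distrib)
  then have "((?M *v v) $ a) = 0" for a by simp
  then have "\<forall>a. (\<Sum>b\<in>UNIV. complex_of_real (A$a$b) * v$b) = z * v$a"
    unfolding Mv_comp by simp
  moreover have "v \<noteq> 0" using xy by (simp add: v_def)
  ultimately show ?thesis by blast
qed

lemma rho_root: "det (mat (complex_of_real rho) - Ac) = 0"
proof -
  let ?M = "mat (complex_of_real rho) - Ac"
  define uc where "uc = (\<chi> a. complex_of_real (uu$a))"
  have "(?M *v uc) $ a = 0" for a
  proof -
    have "(\<Sum>b\<in>UNIV. complex_of_real (A$a$b) * uc$b) = complex_of_real (\<Sum>b\<in>UNIV. A$a$b * uu$b)"
      by (simp add: uc_def)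
    then show ?thesis unfolding Mv_comp Au_comp by (simp add: uc_def)
  qed
  then have "?M *v uc = 0" by (simp add: vec_eq_iff)
  moreover have "uc \<noteq> 0"
  proof
    assume "uc = 0"
    then have "uc $ a = 0" for a by simp
    then show False using u_pos[of undefined] by (simp add: uc_def)
  qed
  ultimately have "\<not> inj ((*v) ?M)"
  proof -
    assume h: "?M *v uc = 0" "uc \<noteq> 0"
    show ?thesis
    proof
      assume "inj ((*v) ?M)"
      moreover have "?M *v uc = ?M *v 0" using h by simp
      ultimately have "uc = 0" by (rule injD)
      then show False using h by simp
    qed
  qed
  moreover have "det (matrix ((*v) ?M)) \<noteq> 0 \<longleftrightarrow> inj ((*v) ?M)"
    by (rule det_nz_iff_inj_gen[OF matrix_vector_mul_linear_gen])
  ultimately show ?thesis unfolding matrix_of_matrix_vector_mul by blast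
qed

end


context lw begin

lemma eig_bound:
  assumes v0: "v \<noteq> 0" and eq: "\<forall>a. (\<Sum>b\<in>UNIV. complex_of_real (A$a$b) * v$b) = z * v$a"
  shows "cmod z \<le> rho"
proof -
  define c where "c = (\<chi> b. cmod (v$b))"
  have ca: "cmod z * c$a \<le> (A *v c)$a" for a
  proof -
    have "cmod z * c$a = cmod (z * v$a)" by (simp add: c_def norm_mult)
    also have "\<dots> = cmod (\<Sum>b\<in>UNIV. complex_of_real (A$a$b) * v$b)" using eq by simp
    also have "\<dots> \<le> (\<Sum>b\<in>UNIV. cmod (complex_of_real (A$a$b) * v$b))" by (rule norm_sum)
    also have "\<dots> = (\<Sum>b\<in>UNIV. A$a$b * c$b)"
      by (intro sum.cong refl) (simp add: c_def norm_mult A_nonneg)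
    finally show ?thesis by (simp add: Av_comp)
  qed
  have "uu \<bullet> (cmod z *\<^sub>R c) \<le> uu \<bullet> (A *v c)"
    unfolding inner_vec_def
  proof (rule sum_mono)
    fix a
    have "uu$a * (cmod z * c$a) \<le> uu$a * (A *v c)$a"
      using ca[of a] u_pos[of a] by (simp add: mult_left_mono)
    then show "uu $ a \<bullet> (cmod z *\<^sub>R c) $ a \<le> uu $ a \<bullet> (A *v c) $ a" by simp
  qed
  also have "uu \<bullet> (A *v c) = c \<bullet> (A *v uu)" by (rule sym_inner)
  also have "\<dots> = rho * (uu \<bullet> c)" using Au by (simp add: inner_commute)
  finally have le: "cmod z * (uu \<bullet> c) \<le> rho * (uu \<bullet> c)" by simp
  obtain a0 where a0: "v$a0 \<noteq> 0" using v0 by (metis vec_eq_iff zero_index)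
  have nn: "0 \<le> uu$a * c$a" for a using u_pos[of a] by (simp add: c_def)
  have "uu$a0 * c$a0 \<le> (\<Sum>a\<in>UNIV. uu$a * c$a)"
    by (rule member_le_sum) (simp_all add: nn)
  moreover have "uu$a0 * c$a0 > 0" using a0 u_pos[of a0] by (simp add: c_def)
  ultimately have "uu \<bullet> c > 0" unfolding inner_vec_def by simp
  then show ?thesis using le by simp
qed

lemma eig_real:
  assumes v0: "v \<noteq> 0" and eq: "\<forall>a. (\<Sum>b\<in>UNIV. complex_of_real (A$a$b) * v$b) = z * v$a"
  shows "Im z = 0"
proof -
  define s where "s = (\<Sum>a\<in>UNIV. \<Sum>b\<in>UNIV. complex_of_real (A$a$b) * cnj (v$a) * v$b)"
  define N where "N = (\<Sum>a\<in>UNIV. (cmod (v$a))^2)"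
  have "s = (\<Sum>a\<in>UNIV. cnj (v$a) * (\<Sum>b\<in>UNIV. complex_of_real (A$a$b) * v$b))"
    unfolding s_def by (simp add: sum_distrib_left mult_ac)
  also have "\<dots> = (\<Sum>a\<in>UNIV. z * (v$a * cnj (v$a)))" using eq by (simp add: mult_ac)
  also have "\<dots> = z * complex_of_real N"
    unfolding N_def by (simp only: complex_norm_square[symmetric] of_real_sum sum_distrib_left)
  finally have s1: "s = z * complex_of_real N" .
  have "cnj s = (\<Sum>a\<in>UNIV. \<Sum>b\<in>UNIV. complex_of_real (A$a$b) * v$a * cnj (v$b))"
    unfolding s_def by (simp add: cnj_sum)
  also have "\<dots> = (\<Sum>b\<in>UNIV. \<Sum>a\<in>UNIV. complex_of_real (A$a$b) * v$a * cnj (v$b))"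
    by (rule sum.swap)
  also have "\<dots> = s" unfolding s_def
  proof (intro sum.cong refl)
    fix x y
    show "complex_of_real (A$y$x) * v$y * cnj (v$x) = complex_of_real (A$x$y) * cnj (v$x) * v$y"
      using A_sym[of y x] by (simp add: mult_ac)
  qed
  finally have s2: "cnj s = s" .
  obtain a0 where a0: "v$a0 \<noteq> 0" using v0 by (metis vec_eq_iff zero_index)
  have "(cmod (v$a0))^2 \<le> N" unfolding N_def by (rule member_le_sum) simp_all
  moreover have "(cmod (v$a0))^2 > 0" using a0 by simp
  ultimately have Np: "N > 0" by linarith
  have "cnj s = cnj z * complex_of_real N" using s1 by simp
  then have "cnj z * complex_of_real N = z * complex_of_real N" using s1 s2 by simp
  then have "cnj z = z" using Np by simp
  then have "Im (cnj z) = Im z" by simp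
  then show ?thesis by simp
qed

lemma real_eigvec:
  assumes v0: "v \<noteq> 0" and eq: "\<forall>a. (\<Sum>b\<in>UNIV. complex_of_real (A$a$b) * v$b) = z * v$a"
    and im: "Im z = 0"
  shows "\<exists>x::real^'n. x \<noteq> 0 \<and> A *v x = Re z *\<^sub>R x"
proof -
  define x where "x = (\<chi> a. Re (v$a))"
  define y where "y = (\<chi> a. Im (v$a))"
  have zr: "z = complex_of_real (Re z)" using im by (simp add: complex_eq_iff)
  have ex: "A *v x = Re z *\<^sub>R x"
  proof -
    have "(A *v x)$a = (Re z *\<^sub>R x)$a" for a
    proof -
      have "Re (\<Sum>b\<in>UNIV. complex_of_real (A$a$b) * v$b) = Re (z * v$a)" using eq by simp
      then show ?thesis using im by (simp add: Av_comp x_def Re_sum)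
    qed
    then show ?thesis by (simp add: vec_eq_iff)
  qed
  have ey: "A *v y = Re z *\<^sub>R y"
  proof -
    have "(A *v y)$a = (Re z *\<^sub>R y)$a" for a
    proof -
      have "Im (\<Sum>b\<in>UNIV. complex_of_real (A$a$b) * v$b) = Im (z * v$a)" using eq by simp
      then show ?thesis using im by (simp add: Av_comp y_def Im_sum)
    qed
    then show ?thesis by (simp add: vec_eq_iff)
  qed
  have "x \<noteq> 0 \<or> y \<noteq> 0"
  proof (rule ccontr)
    assume "\<not> ?thesis"
    then have "x = 0" "y = 0" by simp_all
    then have "v$a = 0" for a
      using vec_eq_iff[of x 0] vec_eq_iff[of y 0] unfolding x_def y_def by (simp add: complex_eq_iff)
    then have "v = 0" by (simp add: vec_eq_iff)
    then show False using v0 by simp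
  qed
  then show ?thesis using ex ey by blast
qed

lemma finite_real_eigs: "finite {r. \<exists>x. x \<noteq> 0 \<and> A *v x = r *\<^sub>R x}"
proof -
  define R where "R = {r. \<exists>x. x \<noteq> 0 \<and> A *v x = r *\<^sub>R x}"
  define g where "g r = (SOME x. x \<noteq> 0 \<and> A *v x = r *\<^sub>R x)" for r
  have g: "g r \<noteq> 0 \<and> A *v g r = r *\<^sub>R g r" if "r \<in> R" for r
  proof -
    have "\<exists>x. x \<noteq> 0 \<and> A *v x = r *\<^sub>R x" using that unfolding R_def by simp
    then show ?thesis unfolding g_def by (rule someI_ex)
  qed
  have orth: "g r \<bullet> g s = 0" if "r \<in> R" "s \<in> R" "r \<noteq> s" for r s
  proof -
    have e1: "A *v g r = r *\<^sub>R g r" using g[OF that(1)] by blast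
    have e2: "A *v g s = s *\<^sub>R g s" using g[OF that(2)] by blast
    have "g s \<bullet> (A *v g r) = g r \<bullet> (A *v g s)" by (rule sym_inner)
    then have "g s \<bullet> (r *\<^sub>R g r) = g r \<bullet> (s *\<^sub>R g s)" unfolding e1 e2 .
    then have "r * (g s \<bullet> g r) = s * (g r \<bullet> g s)" by (simp only: inner_scaleR_right)
    moreover have "g s \<bullet> g r = g r \<bullet> g s" by (rule inner_commute)
    ultimately have "(r - s) * (g r \<bullet> g s) = 0" by (simp add: left_diff_distrib)
    then show ?thesis using that(3) by simp
  qed
  have inj: "inj_on g R"
  proof (rule inj_onI)
    fix r s assume rs: "r \<in> R" "s \<in> R" "g r = g s"
    have e1: "A *v g r = r *\<^sub>R g r" using g[OF rs(1)] by blast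
    have e2: "A *v g s = s *\<^sub>R g s" using g[OF rs(2)] by blast
    have "r *\<^sub>R g r = s *\<^sub>R g r" using e1 e2 rs(3) by metis
    moreover have "g r \<noteq> 0" using g[OF rs(1)] by blast
    ultimately show "r = s" by (simp add: scaleR_cancel_right)
  qed
  have "pairwise orthogonal (g ` R)"
    unfolding pairwise_def orthogonal_def using orth by blast
  moreover have "0 \<notin> g ` R"
  proof
    assume "0 \<in> g ` R"
    then obtain r where "r \<in> R" "0 = g r" by blast
    then show False using g[of r] by simp
  qed
  ultimately have "independent (g ` R)" by (rule pairwise_orthogonal_independent)
  then have "finite (g ` R)" using independent_bound by blast
  then have "finite R" using inj finite_imageD by blast
  then show ?thesis unfolding R_def .
qed

lemma spec_radius_rho: "spec_radius A = rho"
proof -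
  define Z where "Z = {z. det (mat z - Ac) = 0}"
  have set_eq: "{cmod z | z. det (mat z - Ac) = 0} = cmod ` Z" unfolding Z_def by blast
  have "Z \<subseteq> complex_of_real ` {r. \<exists>x. x \<noteq> 0 \<and> A *v x = r *\<^sub>R x}"
  proof
    fix z assume "z \<in> Z"
    then obtain v where v: "v \<noteq> 0" "\<forall>a. (\<Sum>b\<in>UNIV. complex_of_real (A$a$b) * v$b) = z * v$a"
      using det0_eig unfolding Z_def by blast
    have im: "Im z = 0" using eig_real[OF v] .
    have "Re z \<in> {r. \<exists>x. x \<noteq> 0 \<and> A *v x = r *\<^sub>R x}" using real_eigvec[OF v im] by blast
    moreover have "z = complex_of_real (Re z)" using im by (simp add: complex_eq_iff)
    ultimately show "z \<in> complex_of_real ` {r. \<exists>x. x \<noteq> 0 \<and> A *v x = r *\<^sub>R x}" by blast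
  qed
  then have fin: "finite Z" using finite_real_eigs finite_surj by blast
  have "Max (cmod ` Z) = rho"
  proof (rule Max_eqI)
    show "finite (cmod ` Z)" using fin by simp
  next
    fix y assume "y \<in> cmod ` Z"
    then obtain z where "z \<in> Z" "y = cmod z" by blast
    then show "y \<le> rho" using det0_eig eig_bound unfolding Z_def by blast
  next
    have "complex_of_real rho \<in> Z" using rho_root unfolding Z_def by simp
    moreover have "cmod (complex_of_real rho) = rho" using rho_pos by simp
    ultimately show "rho \<in> cmod ` Z" by (metis image_eqI)
  qed
  then show ?thesis unfolding spec_radius_def set_eq .
qed

end


context lw begin

definition Nop :: "real \<Rightarrow> real^'n \<Rightarrow> real^'n" where
  "Nop e x = (rho + e) *\<^sub>R x - A *v x + (rho * (uu \<bullet> x)) *\<^sub>R uu"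

definition lap :: "real^'n \<Rightarrow> real" where
  "lap x = (\<Sum>a\<in>UNIV. \<Sum>b\<in>UNIV. A$a$b * uu$a * uu$b * (x$a/uu$a - x$b/uu$b)^2)"

lemma lap_nonneg: "lap x \<ge> 0"
  unfolding lap_def using A_nonneg u_pos
  by (intro sum_nonneg) (simp add: less_imp_le)

lemma lap_identity: "lap x = 2 * (rho * (x \<bullet> x) - x \<bullet> (A *v x))"
proof -
  have un: "uu$a \<noteq> 0" for a using u_pos[of a] by simp
  have pt: "A$a$b * uu$a * uu$b * (x$a/uu$a - x$b/uu$b)^2
      = A$a$b * uu$b * (x$a^2/uu$a) + A$a$b * uu$a * (x$b^2/uu$b) - 2 * (A$a$b * x$a * x$b)" for a b
    using un[of a] un[of b] by (simp add: field_simps power2_eq_square)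
  have t1: "(\<Sum>a\<in>UNIV. \<Sum>b\<in>UNIV. A$a$b * uu$b * (x$a^2/uu$a)) = rho * (x \<bullet> x)"
  proof -
    have "(\<Sum>b\<in>UNIV. A$a$b * uu$b * (x$a^2/uu$a)) = rho * (x$a * x$a)" for a
    proof -
      have "(\<Sum>b\<in>UNIV. A$a$b * uu$b * (x$a^2/uu$a)) = (\<Sum>b\<in>UNIV. A$a$b * uu$b) * (x$a^2/uu$a)"
        by (rule sum_distrib_right[symmetric])
      also have "\<dots> = rho * uu$a * (x$a^2/uu$a)" by (simp add: Au_comp)
      also have "\<dots> = rho * (x$a * x$a)" using un[of a] by (simp add: field_simps power2_eq_square)
      finally show ?thesis .
    qed
    then show ?thesis by (simp add: inner_vec_def sum_distrib_left)
  qed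
  have t2: "(\<Sum>a\<in>UNIV. \<Sum>b\<in>UNIV. A$a$b * uu$a * (x$b^2/uu$b)) = rho * (x \<bullet> x)"
  proof -
    have "(\<Sum>a\<in>UNIV. \<Sum>b\<in>UNIV. A$a$b * uu$a * (x$b^2/uu$b)) = (\<Sum>b\<in>UNIV. \<Sum>a\<in>UNIV. A$a$b * uu$a * (x$b^2/uu$b))"
      by (rule sum.swap)
    also have "\<dots> = (\<Sum>b\<in>UNIV. \<Sum>a\<in>UNIV. A$b$a * uu$a * (x$b^2/uu$b))"
      by (intro sum.cong refl) (simp add: A_sym)
    finally show ?thesis using t1 by simp
  qed
  have t3: "(\<Sum>a\<in>UNIV. \<Sum>b\<in>UNIV. A$a$b * x$a * x$b) = x \<bullet> (A *v x)"
    unfolding inner_Av by (intro sum.cong refl) (simp add: mult_ac)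
  have "lap x = (\<Sum>a\<in>UNIV. \<Sum>b\<in>UNIV. A$a$b * uu$b * (x$a^2/uu$a) + A$a$b * uu$a * (x$b^2/uu$b) - 2 * (A$a$b * x$a * x$b))"
    unfolding lap_def pt ..
  also have "\<dots> = (\<Sum>a\<in>UNIV. \<Sum>b\<in>UNIV. A$a$b * uu$b * (x$a^2/uu$a)) + (\<Sum>a\<in>UNIV. \<Sum>b\<in>UNIV. A$a$b * uu$a * (x$b^2/uu$b))
      - 2 * (\<Sum>a\<in>UNIV. \<Sum>b\<in>UNIV. A$a$b * x$a * x$b)"
    by (simp add: sum.distrib sum_subtractf sum_distrib_left)
  also have "\<dots> = 2 * (rho * (x \<bullet> x) - x \<bullet> (A *v x))" unfolding t1 t2 t3 by simp
  finally show ?thesis .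
qed

lemma xNx: "x \<bullet> Nop e x = lap x / 2 + e * (x \<bullet> x) + rho * (uu \<bullet> x)^2"
proof -
  have h1: "x \<bullet> Nop e x = (rho + e) * (x \<bullet> x) - x \<bullet> (A *v x) + rho * (uu \<bullet> x)^2"
    unfolding Nop_def by (simp add: inner_diff_right inner_add_right power2_eq_square inner_commute)
  have h2: "lap x / 2 = rho * (x \<bullet> x) - x \<bullet> (A *v x)" by (simp add: lap_identity)
  show ?thesis unfolding h1 h2 by (simp add: algebra_simps)
qed

lemma Nop_zero:
  assumes "x \<bullet> Nop 0 x = 0" shows "x = 0"
proof -
  have e: "lap x / 2 + rho * (uu \<bullet> x)^2 = 0" using assms unfolding xNx by simp
  have p1: "rho * (uu \<bullet> x)^2 \<ge> 0" using rho_pos by simp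
  have l0: "lap x = 0" using e p1 lap_nonneg[of x] by linarith
  then have "rho * (uu \<bullet> x)^2 = 0" using e by simp
  then have c0: "uu \<bullet> x = 0" using rho_pos by simp
  have nn: "0 \<le> A$a$b * uu$a * uu$b * (x$a/uu$a - x$b/uu$b)^2" for a b
    using A_nonneg[of a b] u_pos[of a] u_pos[of b] by simp
  have "(\<Sum>a\<in>UNIV. \<Sum>b\<in>UNIV. A$a$b * uu$a * uu$b * (x$a/uu$a - x$b/uu$b)^2) = 0" using l0 unfolding lap_def .
  then have "\<forall>a\<in>UNIV. (\<Sum>b\<in>UNIV. A$a$b * uu$a * uu$b * (x$a/uu$a - x$b/uu$b)^2) = 0"
    by (subst (asm) sum_nonneg_eq_0_iff) (simp_all add: sum_nonneg nn)
  then have "\<forall>a\<in>UNIV. \<forall>b\<in>UNIV. A$a$b * uu$a * uu$b * (x$a/uu$a - x$b/uu$b)^2 = 0"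
    by (subst (asm) sum_nonneg_eq_0_iff) (simp_all add: nn)
  then have z: "A$a$b * uu$a * uu$b * (x$a/uu$a - x$b/uu$b)^2 = 0" for a b by blast
  have eq: "A$a$b > 0 \<Longrightarrow> x$a/uu$a = x$b/uu$b" for a b
    using z[of a b] u_pos[of a] u_pos[of b] by simp
  define c where "c = x$undefined / uu$undefined"
  have xb0: "x$b / uu$b = c" for b
  proof (rule conn_prop[of "\<lambda>z. x$z / uu$z = c" undefined b])
    show "x $ undefined / uu $ undefined = c" by (simp add: c_def)
  next
    fix z y assume "x$z / uu$z = c" "0 < A$z$y"
    then show "x$y / uu$y = c" using eq[of z y] by simp
  qed
  have xb: "x$b = c * uu$b" for b using xb0[of b] u_pos[of b] by (simp add: divide_eq_eq)
  then have xc: "x = c *\<^sub>R uu" by (simp add: vec_eq_iff)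
  then have "uu \<bullet> x = c" using uu1 by simp
  then show ?thesis using c0 xc by simp
qed

lemma Nop_eps: "Nop e x = Nop 0 x + e *\<^sub>R x"
  unfolding Nop_def by (simp add: algebra_simps)

lemma Nop_add: "Nop e (x + y) = Nop e x + Nop e y"
  unfolding Nop_def by (simp add: algebra_simps inner_add_right matrix_vector_right_distrib)

lemma Nop_scale: "Nop e (c *\<^sub>R x) = c *\<^sub>R Nop e x"
  unfolding Nop_def by (simp add: algebra_simps matrix_vector_mult_scaleR)

lemma Nop_diff: "Nop e (x - y) = Nop e x - Nop e y"
  using Nop_add[of e "x - y" y] by simp

lemma linear_Nop: "linear (Nop e)"
  by (rule linearI) (simp_all add: Nop_add Nop_scale)

lemma Nop_sym: "x \<bullet> Nop e y = y \<bullet> Nop e x"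
  unfolding Nop_def using sym_inner[of x y]
  by (simp add: inner_diff_right inner_add_right inner_commute)

end


context lw begin

lemma xNx_nonneg: "e \<ge> 0 \<Longrightarrow> x \<bullet> Nop e x \<ge> 0"
  unfolding xNx using lap_nonneg[of x] rho_pos
  by (intro add_nonneg_nonneg divide_nonneg_pos mult_nonneg_nonneg) simp_all

lemma coercive: "\<exists>l>0. \<forall>x. l * (x \<bullet> x) \<le> x \<bullet> Nop 0 x"
proof -
  have cont: "continuous_on (sphere (0::real^'n) 1) (\<lambda>x. x \<bullet> Nop 0 x)"
    unfolding Nop_def by (intro continuous_intros)
  have ne: "sphere (0::real^'n) 1 \<noteq> {}" by simp
  obtain x0 where x0: "x0 \<in> sphere (0::real^'n) 1" and xmin: "\<forall>y\<in>sphere 0 1. x0 \<bullet> Nop 0 x0 \<le> y \<bullet> Nop 0 y"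
    using continuous_attains_inf[OF compact_sphere ne cont] by blast
  define l where "l = x0 \<bullet> Nop 0 x0"
  have "x0 \<noteq> 0" using x0 by auto
  then have "l \<noteq> 0" using Nop_zero unfolding l_def by blast
  moreover have "l \<ge> 0" unfolding l_def by (rule xNx_nonneg) simp
  ultimately have lp: "l > 0" by simp
  have "l * (y \<bullet> y) \<le> y \<bullet> Nop 0 y" for y
  proof (cases "y = 0")
    case True then show ?thesis by simp
  next
    case False
    define c where "c = inverse (norm y)"
    have "c *\<^sub>R y \<in> sphere 0 1" using False by (simp add: c_def)
    then have "l \<le> (c *\<^sub>R y) \<bullet> Nop 0 (c *\<^sub>R y)" using xmin unfolding l_def by blast
    also have "\<dots> = c^2 * (y \<bullet> Nop 0 y)" by (simp add: Nop_scale power2_eq_square)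
    finally have h: "l \<le> c^2 * (y \<bullet> Nop 0 y)" .
    have yy: "y \<bullet> y = (norm y)^2" by (simp add: power2_norm_eq_inner)
    have "l * (norm y)^2 \<le> c^2 * (y \<bullet> Nop 0 y) * (norm y)^2"
      using h by (simp add: mult_right_mono)
    also have "\<dots> = y \<bullet> Nop 0 y" using False by (simp add: c_def field_simps)
    finally show ?thesis unfolding yy .
  qed
  then show ?thesis using lp by blast
qed

definition lam :: real where "lam = (SOME l. l > 0 \<and> (\<forall>x. l * (x \<bullet> x) \<le> x \<bullet> Nop 0 x))"

lemma lam: "lam > 0" "lam * (x \<bullet> x) \<le> x \<bullet> Nop 0 x"
proof -
  have "lam > 0 \<and> (\<forall>x. lam * (x \<bullet> x) \<le> x \<bullet> Nop 0 x)"
    unfolding lam_def using coercive by (rule someI_ex)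
  then show "lam > 0" "lam * (x \<bullet> x) \<le> x \<bullet> Nop 0 x" by blast+
qed

lemma xNe: "x \<bullet> Nop e x = x \<bullet> Nop 0 x + e * (x \<bullet> x)"
  unfolding Nop_eps[of e x] by (simp add: inner_add_right)

lemma Nop_inj: assumes "e \<ge> 0" shows "inj (Nop e)"
proof (rule injI)
  fix x y assume "Nop e x = Nop e y"
  then have "Nop e (x - y) = 0" by (simp add: Nop_diff)
  then have "(x - y) \<bullet> Nop e (x - y) = 0" by simp
  then have "(x - y) \<bullet> Nop 0 (x - y) + e * ((x - y) \<bullet> (x - y)) = 0" unfolding xNe[of "x - y" e] .
  moreover have "(x - y) \<bullet> Nop 0 (x - y) \<ge> 0" by (rule xNx_nonneg) simp
  moreover have "e * ((x - y) \<bullet> (x - y)) \<ge> 0" using assms by simp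
  ultimately have "(x - y) \<bullet> Nop 0 (x - y) = 0" by linarith
  then have "x - y = 0" by (rule Nop_zero)
  then show "x = y" by simp
qed

lemma Nop_surj: assumes "e \<ge> 0" shows "surj (Nop e)"
  by (rule linear_injective_imp_surjective) (simp_all add: linear_Nop Nop_inj assms)

definition sol :: "real \<Rightarrow> real^'n \<Rightarrow> real^'n" where "sol e y = (THE m. Nop e m = y)"

lemma sol: assumes "e \<ge> 0" shows "Nop e (sol e y) = y"
proof -
  have "\<exists>!m. Nop e m = y"
  proof -
    obtain m where m: "y = Nop e m" using surjD[OF Nop_surj[OF assms]] by blast
    have "m' = m" if "Nop e m' = y" for m'
    proof -
      have "Nop e m' = Nop e m" using that m by simp
      then show ?thesis by (rule injD[OF Nop_inj[OF assms]])
    qed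
    then show ?thesis using m by blast
  qed
  then show ?thesis unfolding sol_def by (rule theI')
qed

lemma sol_unique: assumes "e \<ge> 0" "Nop e m = y" shows "sol e y = m"
proof -
  have "Nop e (sol e y) = Nop e m" using sol[OF assms(1), of y] assms(2) by simp
  then show ?thesis by (rule injD[OF Nop_inj[OF assms(1)]])
qed

lemma sol_bound:
  assumes e: "e \<ge> 0"
  shows "norm (sol e y - sol 0 y) \<le> e * norm (sol 0 y) / lam"
proof -
  define d where "d = sol e y - sol 0 y"
  define s where "s = sol 0 y"
  have "Nop e d = y - Nop e s" unfolding d_def s_def by (simp add: Nop_diff sol[OF e])
  also have "\<dots> = - (e *\<^sub>R s)" using sol[of 0 y] unfolding Nop_eps[of e s] unfolding s_def by simp
  finally have Nd: "Nop e d = - (e *\<^sub>R s)" .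
  have "lam * (d \<bullet> d) \<le> d \<bullet> Nop 0 d" by (rule lam)
  also have "\<dots> \<le> d \<bullet> Nop e d" using e unfolding xNe[of d e] by simp
  also have "\<dots> = e * ((- d) \<bullet> s)" unfolding Nd by simp
  also have "\<dots> \<le> e * (norm d * norm s)"
    using mult_left_mono[OF norm_cauchy_schwarz[of "-d" s] e] by simp
  finally have h: "lam * (norm d)^2 \<le> e * (norm d * norm s)" by (simp add: power2_norm_eq_inner)
  show ?thesis
  proof (cases "d = 0")
    case True then show ?thesis using e lam(1) unfolding d_def by simp
  next
    case False
    then have nd: "norm d > 0" by simp
    from h have "(lam * norm d) * norm d \<le> (e * norm s) * norm d" by (simp add: power2_eq_square mult_ac)
    then have "lam * norm d \<le> e * norm s" using nd by simp
    then show ?thesis using lam(1) unfolding d_def s_def by (simp add: field_simps)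
  qed
qed

lemma sol_tendsto: "((\<lambda>a. sol (inverse a) y) \<longlongrightarrow> sol 0 y) at_top"
proof -
  have "((\<lambda>a. sol (inverse a) y - sol 0 y) \<longlongrightarrow> 0) at_top"
  proof (rule Lim_null_comparison)
    show "\<forall>\<^sub>F a in at_top. norm (sol (inverse a) y - sol 0 y) \<le> inverse a * (norm (sol 0 y) / lam)"
      using eventually_ge_at_top[of "0::real"]
    proof eventually_elim
      case (elim a)
      then show ?case using sol_bound[of "inverse a" y] by simp
    qed
    have inv0: "((\<lambda>a::real. inverse a) \<longlongrightarrow> 0) at_top" by (rule tendsto_inverse_0_at_top[OF filterlim_ident])
    show "((\<lambda>a. inverse a * (norm (sol 0 y) / lam)) \<longlongrightarrow> 0) at_top"
      using tendsto_mult_right_zero[OF inv0, of "norm (sol 0 y) / lam"] by (simp add: ac_simps)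
  qed
  then have "((\<lambda>a. (sol (inverse a) y - sol 0 y) + sol 0 y) \<longlongrightarrow> 0 + sol 0 y) at_top"
    by (intro tendsto_add tendsto_const)
  then show ?thesis by simp
qed

end


context lw begin

definition qv :: "real \<Rightarrow> 'n \<Rightarrow> real^'n" where
  "qv e j = sol e (axis j 1) - (uu \<bullet> sol e (axis j 1)) *\<^sub>R uu"

lemma uu_Nop: "uu \<bullet> Nop e m = (rho + e) * (uu \<bullet> m)"
proof -
  have "uu \<bullet> (A *v m) = m \<bullet> (A *v uu)" by (rule sym_inner)
  also have "\<dots> = rho * (uu \<bullet> m)" unfolding Au by (simp add: inner_commute)
  finally have h: "uu \<bullet> (A *v m) = rho * (uu \<bullet> m)" .
  show ?thesis unfolding Nop_def
    by (simp add: inner_diff_right inner_add_right h uu1 algebra_simps)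
qed

lemma uu_sol: "e \<ge> 0 \<Longrightarrow> (rho + e) * (uu \<bullet> sol e y) = uu \<bullet> y"
  using uu_Nop[of e "sol e y"] sol[of e y] by simp

lemma M_apply: "(mat 1 - t *\<^sub>R A) *v x = x - t *\<^sub>R (A *v x)"
  by (simp add: matrix_vector_mult_diff_rdistrib scaleR_matrix_vector_assoc[symmetric])

lemma M_inj:
  assumes e: "e > 0" and t: "t = inverse (rho + e)"
  shows "inj ((*v) (mat 1 - t *\<^sub>R A))"
proof (rule injI)
  fix x y assume "(mat 1 - t *\<^sub>R A) *v x = (mat 1 - t *\<^sub>R A) *v y"
  then have "(mat 1 - t *\<^sub>R A) *v (x - y) = 0" by (simp add: matrix_vector_mult_diff_distrib)
  then have "x - y = t *\<^sub>R (A *v (x - y))" unfolding M_apply by simp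
  then have "(rho + e) *\<^sub>R (x - y) = A *v (x - y)" using e rho_pos unfolding t
    by (metis (no_types, lifting) add_pos_pos divideR_right less_numeral_extra(3) inverse_eq_divide)
  then have "(rho + e) * ((x - y) \<bullet> (x - y)) = qf (x - y)" unfolding qf_def
    by (metis inner_scaleR_right)
  moreover have "qf (x - y) \<le> rho * ((x - y) \<bullet> (x - y))" by (rule qf_le)
  ultimately have "e * ((x - y) \<bullet> (x - y)) \<le> 0" by (simp add: algebra_simps)
  then have "(x - y) \<bullet> (x - y) \<le> 0" using e by (simp add: mult_le_0_iff)
  then have "(x - y) \<bullet> (x - y) = 0" using inner_ge_zero[of "x - y"] by linarith
  then show "x = y" by simp
qed

lemma resolvent_entry:
  assumes a: "a > 0"
  shows "lw_r A a $ i $ j = (rho + inverse a) * (uu$i * uu$j / inverse a + qv (inverse a) j $ i)"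
proof -
  define e where "e = inverse a"
  have e: "e > 0" using a by (simp add: e_def)
  define t where "t = inverse (rho + e)"
  have tA: "lw_t A a = t" unfolding lw_t_def t_def e_def spec_radius_rho ..
  define M where "M = mat 1 - t *\<^sub>R A"
  have injM: "inj ((*v) M)" unfolding M_def by (rule M_inj[OF e t_def])
  have "surj ((*v) M)" by (rule linear_injective_imp_surjective) (simp_all add: injM)
  then have "invertible M" using injM by (simp add: invertible_eq_bij bij_def)
  then have "\<exists>R. M ** R = mat 1 \<and> R ** M = mat 1" unfolding invertible_def .
  then have MR: "M ** matrix_inv M = mat 1" unfolding matrix_inv_def by (rule someI2_ex) blast
  have R: "lw_r A a = matrix_inv M" unfolding lw_r_def tA M_def ..
  define ej where "ej = (axis j 1 :: real^'n)"
  define m where "m = sol e ej"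
  define \<mu> where "\<mu> = uu \<bullet> m"
  define c where "c = (rho + e) *\<^sub>R ((uu$j / e) *\<^sub>R uu + m - \<mu> *\<^sub>R uu)"
  have F1: "Nop e m = ej" unfolding m_def using e by (simp add: sol)
  have F2: "(rho + e) * \<mu> = uu$j" unfolding \<mu>_def m_def using uu_sol[of e ej] e
    by (simp add: ej_def inner_axis)
  have Ami: "(A *v m)$k = (rho + e) * m$k + rho * \<mu> * uu$k - ej$k" for k
  proof -
    have "A *v m = (rho + e) *\<^sub>R m + (rho * \<mu>) *\<^sub>R uu - Nop e m" unfolding Nop_def \<mu>_def by simp
    then show ?thesis unfolding F1 by simp
  qed
  have Aui: "(A *v uu)$k = rho * uu$k" for k using Au by simp
  have Ac: "A *v c = (rho + e) *\<^sub>R ((uu$j / e) *\<^sub>R (A *v uu) + A *v m - \<mu> *\<^sub>R (A *v uu))"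
    unfolding c_def by (simp add: matrix_vector_mult_scaleR matrix_vector_right_distrib matrix_vector_mult_diff_distrib)
  have Mc: "M *v c = ej"
  proof -
    have "(M *v c)$k = ej$k" for k
    proof -
      have "(M *v c)$k = c$k - t * (A *v c)$k" unfolding M_def M_apply by simp
      also have "\<dots> = (rho + e) * (uu$j / e * uu$k + m$k - \<mu> * uu$k)
          - t * ((rho + e) * (uu$j / e * (rho * uu$k) + ((rho + e) * m$k + rho * \<mu> * uu$k - ej$k) - \<mu> * (rho * uu$k)))"
        unfolding Ac by (simp add: c_def Ami Aui)
      also have "\<dots> = (rho + e) * (uu$j / e * uu$k + m$k - \<mu> * uu$k)
          - (uu$j / e * (rho * uu$k) + (rho + e) * m$k - ej$k)"
      proof -
        have tt: "t * (rho + e) = 1" using e rho_pos unfolding t_def by simp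
        have tX: "t * ((rho + e) * X) = X" for X by (simp add: mult.assoc[symmetric] tt)
        have "uu$j / e * (rho * uu$k) + ((rho + e) * m$k + rho * \<mu> * uu$k - ej$k) - \<mu> * (rho * uu$k)
           = uu$j / e * (rho * uu$k) + (rho + e) * m$k - ej$k" by (simp add: algebra_simps)
        then show ?thesis unfolding tX by simp
      qed
      also have "\<dots> = ej$k"
      proof -
        have h1: "(rho + e) * (uu$j / e * uu$k) = uu$j / e * (rho * uu$k) + uu$j * uu$k"
          using e by (simp add: field_simps)
        have h2: "(rho + e) * (\<mu> * uu$k) = uu$j * uu$k" using F2 by (simp add: mult.assoc[symmetric])
        have "(rho + e) * (uu$j / e * uu$k + m$k - \<mu> * uu$k)
            = (rho + e) * (uu$j / e * uu$k) + (rho + e) * m$k - (rho + e) * (\<mu> * uu$k)"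
          by (simp add: algebra_simps)
        then show ?thesis unfolding h1 h2 by simp
      qed
      finally show ?thesis .
    qed
    then show ?thesis by (simp add: vec_eq_iff)
  qed
  have "M *v (matrix_inv M *v ej) = ej" unfolding matrix_vector_mul_assoc MR ej_def by simp
  then have "matrix_inv M *v ej = c" using Mc injM by (metis injD)
  then have "(matrix_inv M *v ej) $ i = c $ i" by simp
  then have "matrix_inv M $ i $ j = c $ i" unfolding ej_def matrix_vector_mult_basis column_def by simp
  moreover have "c $ i = (rho + e) * (uu$i * uu$j / e + qv e j $ i)"
    unfolding c_def qv_def m_def \<mu>_def ej_def by (simp add: algebra_simps)
  ultimately show ?thesis unfolding R e_def by simp
qed

end



lemma ln_lim_lemma:
  fixes q :: "real \<Rightarrow> real"
  assumes a0: "a0 > 0" and q: "(q \<longlongrightarrow> q0) at_top"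
  shows "((\<lambda>x. x * (ln (a0 + q x / x) - ln a0)) \<longlongrightarrow> q0 / a0) at_top"
proof -
  define y where "y x = q x * inverse x / a0" for x
  have inv0: "((\<lambda>x::real. inverse x) \<longlongrightarrow> 0) at_top" by (rule tendsto_inverse_0_at_top[OF filterlim_ident])
  have y0: "(y \<longlongrightarrow> 0) at_top"
    unfolding y_def using tendsto_divide[OF tendsto_mult[OF q inv0] tendsto_const[of a0]] a0 by simp
  have ev_y: "\<forall>\<^sub>F x in at_top. \<bar>y x\<bar> < 1/2"
    using tendstoD[OF y0, of "1/2"] by (simp add: dist_real_def)
  define err where "err x = x * (ln (1 + y x) - y x)" for x
  have err0: "(err \<longlongrightarrow> 0) at_top"
  proof (rule Lim_null_comparison)
    show "\<forall>\<^sub>F x in at_top. norm (err x) \<le> 2 * (q x)^2 / a0^2 * inverse x"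
      using ev_y eventually_gt_at_top[of "0::real"]
    proof eventually_elim
      case (elim x)
      have "\<bar>ln (1 + y x) - y x\<bar> \<le> 2 * (y x)^2"
        by (rule abs_ln_one_plus_x_minus_x_bound) (use elim in simp)
      then have "x * \<bar>ln (1 + y x) - y x\<bar> \<le> x * (2 * (y x)^2)"
        using elim by (simp add: mult_left_mono)
      also have "x * (2 * (y x)^2) = 2 * (q x)^2 / a0^2 * inverse x"
        using elim a0 unfolding y_def by (simp add: field_simps power2_eq_square)
      finally show ?case using elim unfolding err_def by (simp add: abs_mult)
    qed
    show "((\<lambda>x. 2 * (q x)^2 / a0^2 * inverse x) \<longlongrightarrow> 0) at_top"
      using tendsto_mult[OF tendsto_mult[OF tendsto_const[of "2::real"] tendsto_divide[OF tendsto_power[OF q, of 2] tendsto_const[of "a0^2"]]] inv0] a0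
      by simp
  qed
  have main: "((\<lambda>x. q x / a0 + err x) \<longlongrightarrow> q0 / a0 + 0) at_top"
    by (intro tendsto_add err0 tendsto_divide q tendsto_const) (use a0 in simp)
  have ev_eq: "\<forall>\<^sub>F x in at_top. q x / a0 + err x = x * (ln (a0 + q x / x) - ln a0)"
    using ev_y eventually_gt_at_top[of "0::real"]
  proof eventually_elim
    case (elim x)
    have p: "1 + y x > 0" using elim by simp
    have "a0 + q x / x = a0 * (1 + y x)" using elim a0 unfolding y_def by (simp add: field_simps)
    then have "ln (a0 + q x / x) = ln a0 + ln (1 + y x)" using a0 p by (simp add: ln_mult)
    then show ?case using elim a0 unfolding err_def y_def by (simp add: field_simps)
  qed
  show ?thesis using Lim_transform_eventually[OF main ev_eq] by simp
qed

lemma theta_lim: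
  assumes n: "n > 0"
  shows "((\<lambda>a. lw_theta n a * inverse a) \<longlongrightarrow> 2 / real n) at_top"
proof -
  have c: "2 / real n > 0" using n by simp
  have l1: "((\<lambda>a::real. ln (exp 1 + a powr (2 / real n)) / ln a) \<longlongrightarrow> 2 / real n) at_top"
    using c by real_asymp
  have l2: "((\<lambda>a::real. (a - 1) / a) \<longlongrightarrow> 1) at_top" by real_asymp
  have "((\<lambda>a. (ln (exp 1 + a powr (2 / real n)) / ln a) * ((a - 1) / a)) \<longlongrightarrow> 2 / real n * 1) at_top"
    by (rule tendsto_mult[OF l1 l2])
  moreover have "(ln (exp 1 + a powr (2 / real n)) / ln a) * ((a - 1) / a) = lw_theta n a * inverse a" for a
    unfolding lw_theta_def by (simp add: field_simps)
  ultimately show ?thesis by simp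
qed



context lw begin

lemma q_tendsto: "((\<lambda>a. qv (inverse a) j $ i) \<longlongrightarrow> qv 0 j $ i) at_top"
  unfolding qv_def by (intro tendsto_intros sol_tendsto)

definition Lq :: "'n \<Rightarrow> 'n \<Rightarrow> real" where
  "Lq i j = (qv 0 i $ i / (uu$i * uu$i) + qv 0 j $ j / (uu$j * uu$j)) / 2 - qv 0 j $ i / (uu$i * uu$j)"

lemma ev_pos:
  fixes q :: "real \<Rightarrow> real" and p q0 :: real
  assumes p: "p > 0" and q: "(q \<longlongrightarrow> q0) at_top"
  shows "\<forall>\<^sub>F a in at_top. p + q a / a > 0"
proof -
  have inv0: "((\<lambda>x::real. inverse x) \<longlongrightarrow> 0) at_top" by (rule tendsto_inverse_0_at_top[OF filterlim_ident])
  have "((\<lambda>a. p + q a * inverse a) \<longlongrightarrow> p + q0 * 0) at_top"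
    by (intro tendsto_add tendsto_const tendsto_mult q inv0)
  then have "((\<lambda>a. p + q a / a) \<longlongrightarrow> p) at_top" by (simp add: divide_inverse)
  then show ?thesis using p by (rule order_tendstoD(1))
qed

lemma lw_expr_tendsto: "(lw_expr A i j \<longlongrightarrow> 2 / real CARD('n) * Lq i j) at_top"
proof -
  define qii where "qii a = qv (inverse a) i $ i" for a
  define qjj where "qjj a = qv (inverse a) j $ j" for a
  define qji where "qji a = qv (inverse a) j $ i" for a
  have pii: "uu$i * uu$i > 0" and pjj: "uu$j * uu$j > 0" and pij: "uu$i * uu$j > 0"
    using u_pos[of i] u_pos[of j] by simp_all
  have Tii: "((\<lambda>a. a * (ln (uu$i * uu$i + qii a / a) - ln (uu$i * uu$i))) \<longlongrightarrow> qv 0 i $ i / (uu$i * uu$i)) at_top"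
    unfolding qii_def by (rule ln_lim_lemma[OF pii q_tendsto])
  have Tjj: "((\<lambda>a. a * (ln (uu$j * uu$j + qjj a / a) - ln (uu$j * uu$j))) \<longlongrightarrow> qv 0 j $ j / (uu$j * uu$j)) at_top"
    unfolding qjj_def by (rule ln_lim_lemma[OF pjj q_tendsto])
  have Tji: "((\<lambda>a. a * (ln (uu$i * uu$j + qji a / a) - ln (uu$i * uu$j))) \<longlongrightarrow> qv 0 j $ i / (uu$i * uu$j)) at_top"
    unfolding qji_def by (rule ln_lim_lemma[OF pij q_tendsto])
  define G where "G a = (a * (ln (uu$i * uu$i + qii a / a) - ln (uu$i * uu$i))
      + a * (ln (uu$j * uu$j + qjj a / a) - ln (uu$j * uu$j))) / 2
      - a * (ln (uu$i * uu$j + qji a / a) - ln (uu$i * uu$j))" for a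
  have GL: "(G \<longlongrightarrow> Lq i j) at_top"
    unfolding G_def Lq_def by (intro tendsto_intros Tii Tjj Tji) simp
  have card: "CARD('n) > 0" by simp
  have main: "((\<lambda>a. (lw_theta CARD('n) a * inverse a) * G a) \<longlongrightarrow> 2 / real CARD('n) * Lq i j) at_top"
    by (rule tendsto_mult[OF theta_lim[OF card] GL])
  have ev: "\<forall>\<^sub>F a in at_top. (lw_theta CARD('n) a * inverse a) * G a = lw_expr A i j a"
    using eventually_gt_at_top[of "0::real"]
      ev_pos[OF pii q_tendsto[of i i]] ev_pos[OF pjj q_tendsto[of j j]] ev_pos[OF pij q_tendsto[of j i]]
  proof eventually_elim
    case (elim a)
    define e where "e = inverse a"
    define K where "K = (rho + e) * a"
    have ap: "a > 0" using elim by simp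
    have Kp: "K > 0" unfolding K_def e_def using ap rho_pos by (intro mult_pos_pos add_pos_pos) simp_all
    have P1: "uu$i * uu$i + qii a / a > 0" using elim unfolding qii_def by simp
    have P2: "uu$j * uu$j + qjj a / a > 0" using elim unfolding qjj_def by simp
    have P3: "uu$i * uu$j + qji a / a > 0" using elim unfolding qji_def by simp
    have r: "(rho + e) * (uu$x * uu$y / e + qv e y $ x) = K * (uu$x * uu$y + qv e y $ x / a)" for x y
      unfolding K_def e_def using ap by (simp add: field_simps)
    have rii: "lw_r A a $ i $ i = K * (uu$i * uu$i + qii a / a)"
      using resolvent_entry[OF ap, of i i] r[of i i] unfolding qii_def e_def by simp
    have rjj: "lw_r A a $ j $ j = K * (uu$j * uu$j + qjj a / a)"
      using resolvent_entry[OF ap, of j j] r[of j j] unfolding qjj_def e_def by simp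
    have rij: "lw_r A a $ i $ j = K * (uu$i * uu$j + qji a / a)"
      using resolvent_entry[OF ap, of i j] r[of i j] unfolding qji_def e_def by simp
    have lnsum: "(ln (uu$i * uu$i) + ln (uu$j * uu$j)) / 2 - ln (uu$i * uu$j) = 0"
      using u_pos[of i] u_pos[of j] by (simp add: ln_mult)
    have "lw_expr A i j a = lw_theta CARD('n) a *
       ((ln (uu$i * uu$i + qii a / a) + ln (uu$j * uu$j + qjj a / a)) / 2 - ln (uu$i * uu$j + qji a / a))"
    proof -
      have lK: "ln (K * P) = ln K + ln P" if "P > 0" for P using Kp that by (simp add: ln_mult)
      have "(ln K + ln (uu$i * uu$i + qii a / a) + (ln K + ln (uu$j * uu$j + qjj a / a))) / 2
          - (ln K + ln (uu$i * uu$j + qji a / a))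
          = (ln (uu$i * uu$i + qii a / a) + ln (uu$j * uu$j + qjj a / a)) / 2 - ln (uu$i * uu$j + qji a / a)"
      proof -
        have gen: "(k + x + (k + y)) / 2 - (k + z) = (x + y) / 2 - z" for k x y z :: real by (simp add: field_simps)
        show ?thesis by (rule gen)
      qed
      then show ?thesis unfolding lw_expr_def rii rjj rij lK[OF P1] lK[OF P2] lK[OF P3] by simp
    qed
    also have "\<dots> = (lw_theta CARD('n) a * inverse a) * G a"
    proof -
      have "G a = a * (((ln (uu$i * uu$i + qii a / a) + ln (uu$j * uu$j + qjj a / a)) / 2 - ln (uu$i * uu$j + qji a / a))
          - ((ln (uu$i * uu$i) + ln (uu$j * uu$j)) / 2 - ln (uu$i * uu$j)))"
      proof -
        have gen2: "(a*(x1-c1) + a*(x2-c2))/2 - a*(x3-c3) = a*((x1+x2)/2 - x3 - ((c1+c2)/2 - c3))"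
          for x1 x2 x3 c1 c2 c3 :: real by (simp add: field_simps)
        show ?thesis unfolding G_def by (rule gen2)
      qed
      then have "G a = a * ((ln (uu$i * uu$i + qii a / a) + ln (uu$j * uu$j + qjj a / a)) / 2 - ln (uu$i * uu$j + qji a / a))"
        unfolding lnsum by simp
      then show ?thesis using ap by simp
    qed
    finally show ?case by simp
  qed
  show ?thesis using Lim_transform_eventually[OF main ev] .
qed

end


context lw begin

lemma dLW_eq: "dLW A i j = 2 / real CARD('n) * Lq i j"
  unfolding dLW_def by (rule tendsto_Lim[OF trivial_limit_at_top_linorder lw_expr_tendsto])

abbreviation S :: "real^'n \<Rightarrow> real^'n" where "S \<equiv> sol 0"

lemma S_Nop: "Nop 0 (S y) = y" by (rule sol) simp

lemma S_add: "S (x + y) = S x + S y"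
  by (rule sol_unique) (simp_all add: Nop_add S_Nop)

lemma S_scale: "S (c *\<^sub>R x) = c *\<^sub>R S x"
  by (rule sol_unique) (simp_all add: Nop_scale S_Nop)

lemma S_diff: "S (x - y) = S x - S y"
  by (rule sol_unique) (simp_all add: Nop_diff S_Nop)

lemma S_sym: "x \<bullet> S y = y \<bullet> S x"
proof -
  have "x \<bullet> S y = Nop 0 (S x) \<bullet> S y" by (simp add: S_Nop)
  also have "\<dots> = S y \<bullet> Nop 0 (S x)" by (rule inner_commute)
  also have "\<dots> = S x \<bullet> Nop 0 (S y)" by (rule Nop_sym)
  also have "\<dots> = S x \<bullet> y" by (simp add: S_Nop)
  finally show ?thesis by (simp add: inner_commute)
qed

lemma uu_S: "uu \<bullet> S y = (uu \<bullet> y) / rho"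
  using uu_sol[of 0 y] rho_pos by (simp add: field_simps)

definition fv :: "'n \<Rightarrow> real^'n" where "fv v = (1 / uu$v) *\<^sub>R axis v 1"

definition D :: "'n \<Rightarrow> 'n \<Rightarrow> real" where "D i j = (fv i - fv j) \<bullet> S (fv i - fv j)"

lemma fv_S: "fv i \<bullet> S (fv j) = S (axis j 1) $ i / (uu$i * uu$j)"
  unfolding fv_def S_scale by (simp add: inner_axis' ) 

lemma qv0: "qv 0 j $ i = S (axis j 1) $ i - uu$i * uu$j / rho"
  unfolding qv_def uu_S by (simp add: inner_axis)

lemma Lq_D: "Lq i j = D i j / 2"
proof -
  have ui: "uu$i \<noteq> 0" and uj: "uu$j \<noteq> 0" using u_pos[of i] u_pos[of j] by simp_all
  have "D i j = fv i \<bullet> S (fv i) + fv j \<bullet> S (fv j) - 2 * (fv i \<bullet> S (fv j))"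
    unfolding D_def S_diff using S_sym[of "fv j" "fv i"]
    by (simp add: inner_diff_left inner_diff_right)
  also have "\<dots> = S (axis i 1) $ i / (uu$i * uu$i) + S (axis j 1) $ j / (uu$j * uu$j)
      - 2 * (S (axis j 1) $ i / (uu$i * uu$j))" unfolding fv_S ..
  finally have Dij: "D i j = \<dots>" .
  have "Lq i j = (S (axis i 1) $ i / (uu$i * uu$i) + S (axis j 1) $ j / (uu$j * uu$j)) / 2
      - S (axis j 1) $ i / (uu$i * uu$j) + ((- 1 / rho) + (- 1 / rho)) / 2 + 1 / rho"
    unfolding Lq_def qv0 using ui uj by (simp add: diff_divide_distrib add_divide_distrib)
  also have "\<dots> = D i j / 2" unfolding Dij by (simp add: field_simps)
  finally show ?thesis .
qed

lemma dLW_D: "dLW A i j = D i j / real CARD('n)"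
  unfolding dLW_eq Lq_D by simp

end



lemma path_single: "is_path E ends [k] k k"
  unfolding is_path_def by simp

lemma path_drop:
  assumes p: "is_path E ends p a b" and l: "l < length p"
  shows "is_path E ends (drop l p) (p ! l) b"
proof -
  from p have ne: "p \<noteq> []" and lst: "last p = b" and d: "distinct p"
    and adj: "\<And>m. Suc m < length p \<Longrightarrow> adjacent E ends (p ! m) (p ! Suc m)"
    unfolding is_path_def by auto
  have "drop l p \<noteq> []" using l by simp
  moreover have "hd (drop l p) = p ! l" using l by (simp add: hd_drop_conv_nth)
  moreover have "last (drop l p) = b" using l lst by simp
  moreover have "distinct (drop l p)" using d by simp
  moreover have "adjacent E ends (drop l p ! m) (drop l p ! Suc m)" if "Suc m < length (drop l p)" for m
    using adj[of "l + m"] that l by simp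
  ultimately show ?thesis unfolding is_path_def by blast
qed

lemma path_cons:
  assumes p: "is_path E ends p b c" and a: "a \<notin> set p" and ab: "adjacent E ends a b"
  shows "is_path E ends (a # p) a c"
proof -
  from p have ne: "p \<noteq> []" and hd: "hd p = b" and lst: "last p = c" and d: "distinct p"
    and adj: "\<And>m. Suc m < length p \<Longrightarrow> adjacent E ends (p ! m) (p ! Suc m)"
    unfolding is_path_def by auto
  have "adjacent E ends ((a # p) ! m) ((a # p) ! Suc m)" if "Suc m < length (a # p)" for m
  proof (cases m)
    case 0 then show ?thesis using ab hd ne by (simp add: hd_conv_nth)
  next
    case (Suc m') then show ?thesis using adj[of m'] that by simp
  qed
  then show ?thesis unfolding is_path_def using ne lst d a by simp
qed

context lw begin

lemma harmonic_max:
  fixes \<phi> :: "'n \<Rightarrow> real"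
  assumes H: "\<And>a. (\<Sum>b\<in>UNIV. A$a$b * uu$b * (\<phi> a - \<phi> b)) = (if a = j then 1/uu$j else 0) - (if a = k then 1/uu$k else 0)"
    and amax: "\<forall>b. \<phi> b \<le> \<phi> a" and aj: "a \<noteq> j"
  shows "a \<noteq> k \<and> (\<forall>b. A$a$b > 0 \<longrightarrow> \<phi> b = \<phi> a)"
proof -
  have nn: "0 \<le> A$a$b * uu$b * (\<phi> a - \<phi> b)" for b
    using A_nonneg[of a b] u_pos[of b] amax by simp
  have s0: "(\<Sum>b\<in>UNIV. A$a$b * uu$b * (\<phi> a - \<phi> b)) \<ge> 0" by (rule sum_nonneg) (simp add: nn)
  have ak: "a \<noteq> k"
  proof
    assume "a = k"
    then have "(\<Sum>b\<in>UNIV. A$a$b * uu$b * (\<phi> a - \<phi> b)) = - (1/uu$k)" using H[of a] aj by simp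
    moreover have "1/uu$k > 0" using u_pos[of k] by simp
    ultimately show False using s0 by simp
  qed
  then have "(\<Sum>b\<in>UNIV. A$a$b * uu$b * (\<phi> a - \<phi> b)) = 0" using H[of a] aj by simp
  moreover have "(\<Sum>b\<in>UNIV. A$a$b * uu$b * (\<phi> a - \<phi> b)) = 0 \<longleftrightarrow> (\<forall>b\<in>UNIV. A$a$b * uu$b * (\<phi> a - \<phi> b) = 0)"
    by (intro sum_nonneg_eq_0_iff) (simp_all add: nn)
  ultimately have z: "A$a$b * uu$b * (\<phi> a - \<phi> b) = 0" for b by blast
  have "\<phi> b = \<phi> a" if "A$a$b > 0" for b using z[of b] that u_pos[of b] by simp
  then show ?thesis using ak by blast
qed

lemma harmonic_min:
  fixes \<phi> :: "'n \<Rightarrow> real"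
  assumes H: "\<And>a. (\<Sum>b\<in>UNIV. A$a$b * uu$b * (\<phi> a - \<phi> b)) = (if a = j then 1/uu$j else 0) - (if a = k then 1/uu$k else 0)"
    and amin: "\<forall>b. A$a$b > 0 \<longrightarrow> \<phi> a \<le> \<phi> b" and aj: "a \<noteq> j" and ak: "a \<noteq> k"
  shows "\<forall>b. A$a$b > 0 \<longrightarrow> \<phi> b = \<phi> a"
proof -
  have np: "A$a$b * uu$b * (\<phi> a - \<phi> b) \<le> 0" for b
  proof (cases "A$a$b > 0")
    case True then show ?thesis using amin u_pos[of b] by (simp add: mult_nonneg_nonpos)
  next
    case False then have "A$a$b = 0" using A_nonneg[of a b] by simp
    then show ?thesis by simp
  qed
  have "(\<Sum>b\<in>UNIV. A$a$b * uu$b * (\<phi> a - \<phi> b)) = 0" using H[of a] aj ak by simp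
  then have "(\<Sum>b\<in>UNIV. - (A$a$b * uu$b * (\<phi> a - \<phi> b))) = 0" by (simp add: sum_negf)
  moreover have "(\<Sum>b\<in>UNIV. - (A$a$b * uu$b * (\<phi> a - \<phi> b))) = 0 \<longleftrightarrow> (\<forall>b\<in>UNIV. - (A$a$b * uu$b * (\<phi> a - \<phi> b)) = 0)"
    by (intro sum_nonneg_eq_0_iff) (simp_all add: np)
  ultimately have z: "A$a$b * uu$b * (\<phi> a - \<phi> b) = 0" for b by simp
  show ?thesis
  proof (intro allI impI)
    fix b assume "A$a$b > 0"
    then show "\<phi> b = \<phi> a" using z[of b] u_pos[of b] by simp
  qed
qed

lemma harmonic_jmax:
  fixes \<phi> :: "'n \<Rightarrow> real"
  assumes H: "\<And>a. (\<Sum>b\<in>UNIV. A$a$b * uu$b * (\<phi> a - \<phi> b)) = (if a = j then 1/uu$j else 0) - (if a = k then 1/uu$k else 0)"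
  shows "\<phi> b \<le> \<phi> j"
proof (rule ccontr)
  assume nb: "\<not> \<phi> b \<le> \<phi> j"
  obtain a0 where a0: "\<forall>b. \<phi> b \<le> \<phi> a0"
  proof -
    have "Max (range \<phi>) \<in> range \<phi>" by (rule Max_in) simp_all
    then obtain a0 where "\<phi> a0 = Max (range \<phi>)" by (metis imageE)
    then have "\<forall>b. \<phi> b \<le> \<phi> a0" by simp
    then show ?thesis using that by blast
  qed
  have "\<forall>b. \<phi> b \<le> \<phi> j"
  proof (rule conn_prop[of "\<lambda>x. \<forall>b. \<phi> b \<le> \<phi> x" a0 j])
    show "\<forall>b. \<phi> b \<le> \<phi> a0" by fact
  next
    fix x y assume x: "\<forall>b. \<phi> b \<le> \<phi> x" and xy: "0 < A$x$y"
    have "x \<noteq> j" using x nb by blast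
    then have "\<phi> y = \<phi> x" using harmonic_max[OF H x] xy by blast
    then show "\<forall>b. \<phi> b \<le> \<phi> y" using x by simp
  qed
  then show False using nb by blast
qed

end


context lw begin

lemma harmonic_geodetic:
  fixes \<phi> :: "'n \<Rightarrow> real"
  assumes H: "\<And>a. (\<Sum>b\<in>UNIV. A$a$b * uu$b * (\<phi> a - \<phi> b)) = (if a = j then 1/uu$j else 0) - (if a = k then 1/uu$k else 0)"
    and jk: "j \<noteq> k"
  shows "\<phi> i = \<phi> j \<longleftrightarrow> (\<forall>p. is_path E ends p i k \<longrightarrow> j \<in> set p)"
proof
  assume eq: "\<phi> i = \<phi> j"
  show "\<forall>p. is_path E ends p i k \<longrightarrow> j \<in> set p"
  proof (intro allI impI)
    fix p assume p: "is_path E ends p i k"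
    show "j \<in> set p"
    proof (rule ccontr)
      assume nj: "j \<notin> set p"
      have "\<phi> k = \<phi> j"
      proof (rule path_nth_prop[OF p, of "\<lambda>x. \<phi> x = \<phi> j"])
        show "\<phi> i = \<phi> j" by fact
      next
        fix x y assume x: "x \<in> set p" "y \<in> set p" "\<phi> x = \<phi> j" "adjacent E ends x y"
        have xmax: "\<forall>b. \<phi> b \<le> \<phi> x" using harmonic_jmax[OF H] x(3) by simp
        have "x \<noteq> j" using x(1) nj by blast
        then have "\<forall>b. A$x$b > 0 \<longrightarrow> \<phi> b = \<phi> x" using harmonic_max[OF H xmax] by blast
        moreover have "A$x$y > 0" using x(4) A_pos_iff by simp
        ultimately show "\<phi> y = \<phi> j" using x(3) by simp
      qed
      then have kmax: "\<forall>b. \<phi> b \<le> \<phi> k" using harmonic_jmax[OF H] by simp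
      have "k \<noteq> k" using harmonic_max[OF H kmax] jk by blast
      then show False by simp
    qed
  qed
next
  assume hyp: "\<forall>p. is_path E ends p i k \<longrightarrow> j \<in> set p"
  show "\<phi> i = \<phi> j"
  proof (cases "i = j")
    case True then show ?thesis by simp
  next
    case False
    define Sset where "Sset = {a. a \<noteq> j \<and> (\<forall>p. is_path E ends p a k \<longrightarrow> j \<in> set p)}"
    have iS: "i \<in> Sset" using False hyp by (simp add: Sset_def)
    have kS: "k \<notin> Sset"
    proof
      assume "k \<in> Sset"
      then have "j \<in> set [k]" using path_single[of E ends k] unfolding Sset_def by blast
      then show False using jk by simp
    qed
    have clos: "b \<in> Sset" if a: "a \<in> Sset" and ab: "A$a$b > 0" and bj: "b \<noteq> j" for a b
    proof -
      have adj: "adjacent E ends a b" using ab A_pos_iff by simp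
      have aj: "a \<noteq> j" and aS: "\<forall>p. is_path E ends p a k \<longrightarrow> j \<in> set p" using a unfolding Sset_def by simp_all
      have "j \<in> set q" if q: "is_path E ends q b k" for q
      proof (rule ccontr)
        assume nj: "j \<notin> set q"
        show False
        proof (cases "a \<in> set q")
          case True
          then obtain l where l: "l < length q" "q ! l = a" by (metis in_set_conv_nth)
          have "is_path E ends (drop l q) a k" using path_drop[OF q l(1)] l(2) by simp
          moreover have "j \<notin> set (drop l q)" using nj set_drop_subset[of l q] by blast
          ultimately show False using aS by blast
        next
          case False
          have "is_path E ends (a # q) a k" by (rule path_cons[OF q False adj])
          moreover have "j \<notin> set (a # q)" using nj aj by simp
          ultimately show False using aS by blast
        qed
      qed
      then show ?thesis using bj unfolding Sset_def by blast
    qed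
    obtain a0 where a0S: "a0 \<in> Sset" and a0min: "\<forall>b\<in>Sset. \<phi> a0 \<le> \<phi> b"
    proof -
      have fin: "finite (\<phi> ` Sset)" by simp
      have "Min (\<phi> ` Sset) \<in> \<phi> ` Sset" using iS by (intro Min_in fin) blast
      then obtain a0 where a0: "a0 \<in> Sset" "\<phi> a0 = Min (\<phi> ` Sset)" by (metis imageE)
      have "\<forall>b\<in>Sset. \<phi> a0 \<le> \<phi> b" unfolding a0(2) using fin by simp
      then show ?thesis using that a0(1) by blast
    qed
    have jmax: "\<phi> b \<le> \<phi> j" for b by (rule harmonic_jmax[OF H])
    have step: "\<phi> y = \<phi> x" if x: "x \<in> Sset" "\<phi> x = \<phi> a0" and xy: "A$x$y > 0" for x y
    proof -
      have "\<forall>b. A$x$b > 0 \<longrightarrow> \<phi> x \<le> \<phi> b"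
      proof (intro allI impI)
        fix b assume xb: "A$x$b > 0"
        show "\<phi> x \<le> \<phi> b"
        proof (cases "b = j")
          case True then show ?thesis using jmax[of x] by simp
        next
          case False then have "b \<in> Sset" using clos[OF x(1) xb] by simp
          then show ?thesis using a0min x(2) by simp
        qed
      qed
      moreover have "x \<noteq> j" using x(1) unfolding Sset_def by simp
      moreover have "x \<noteq> k" using x(1) kS by blast
      ultimately show ?thesis using harmonic_min[OF H] xy by blast
    qed
    have "(j \<in> Sset \<and> \<phi> j = \<phi> a0) \<or> \<phi> j = \<phi> a0"
    proof (rule conn_prop[of "\<lambda>z. (z \<in> Sset \<and> \<phi> z = \<phi> a0) \<or> \<phi> j = \<phi> a0" a0 j])
      show "(a0 \<in> Sset \<and> \<phi> a0 = \<phi> a0) \<or> \<phi> j = \<phi> a0" using a0S by simp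
    next
      fix x y assume P: "(x \<in> Sset \<and> \<phi> x = \<phi> a0) \<or> \<phi> j = \<phi> a0" and xy: "A$x$y > 0"
      show "(y \<in> Sset \<and> \<phi> y = \<phi> a0) \<or> \<phi> j = \<phi> a0"
      proof (cases "\<phi> j = \<phi> a0")
        case True then show ?thesis by simp
      next
        case False
        then have x: "x \<in> Sset" "\<phi> x = \<phi> a0" using P by auto
        have ya: "\<phi> y = \<phi> a0" using step[OF x xy] x(2) by simp
        then have "y \<noteq> j" using False by auto
        then show ?thesis using clos[OF x(1) xy] ya by simp
      qed
    qed
    then have "\<phi> j = \<phi> a0" by blast
    moreover have "\<phi> a0 \<le> \<phi> i" using a0min iS by simp
    moreover have "\<phi> i \<le> \<phi> j" by (rule jmax)
    ultimately show ?thesis by simp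
  qed
qed

end


context lw begin

lemma fv_inner: "fv v \<bullet> z = z$v / uu$v"
  unfolding fv_def by (simp add: inner_axis')

lemma fv_comp: "fv v $ a = (if a = v then 1 / uu$v else 0)"
  unfolding fv_def by (simp add: axis_def)

lemma S_zero: "S 0 = 0"
  using S_scale[of 0 0] by simp

lemma geodetic_D: "D i j + D j k = D i k \<longleftrightarrow> (\<forall>p. is_path E ends p i k \<longrightarrow> j \<in> set p)"
proof (cases "j = k")
  case True
  have "D j j = 0" unfolding D_def by (simp add: S_zero)
  moreover have "j \<in> set p" if "is_path E ends p i k" for p
    using that True unfolding is_path_def by (metis last_in_set)
  ultimately show ?thesis using True by simp
next
  case jk: False
  define x where "x = fv i - fv j"
  define y where "y = fv j - fv k"
  define z where "z = S y"
  define \<phi> where "\<phi> a = z$a / uu$a" for a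
  have Dik: "D i k = D i j + D j k + 2 * (x \<bullet> z)"
  proof -
    have "fv i - fv k = x + y" unfolding x_def y_def by simp
    then have "D i k = (x + y) \<bullet> S (x + y)" unfolding D_def by simp
    also have "\<dots> = x \<bullet> S x + y \<bullet> S y + x \<bullet> S y + y \<bullet> S x"
      by (simp add: S_add inner_add_left inner_add_right)
    also have "y \<bullet> S x = x \<bullet> S y" by (rule S_sym)
    finally show ?thesis unfolding D_def x_def y_def z_def by simp
  qed
  have xz: "x \<bullet> z = \<phi> i - \<phi> j" unfolding x_def \<phi>_def by (simp add: inner_diff_left fv_inner)
  have uy: "uu \<bullet> y = 0"
    unfolding y_def using u_pos[of j] u_pos[of k] by (simp add: inner_diff_right inner_commute[of uu] fv_inner)
  have uz: "uu \<bullet> z = 0" unfolding z_def uu_S uy by simp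
  have Nz: "Nop 0 z = y" unfolding z_def by (rule S_Nop)
  have yz: "y = rho *\<^sub>R z - A *v z" using Nz unfolding Nop_def uz by simp
  have H: "(\<Sum>b\<in>UNIV. A$a$b * uu$b * (\<phi> a - \<phi> b)) = (if a = j then 1/uu$j else 0) - (if a = k then 1/uu$k else 0)" for a
  proof -
    have ub: "uu$b * \<phi> b = z$b" for b unfolding \<phi>_def using u_pos[of b] by simp
    have s1: "(\<Sum>b\<in>UNIV. A$a$b * uu$b * (\<phi> a - \<phi> b)) = (\<Sum>b\<in>UNIV. A$a$b * uu$b * \<phi> a) - (\<Sum>b\<in>UNIV. A$a$b * (uu$b * \<phi> b))"
      by (simp add: sum_subtractf[symmetric] right_diff_distrib mult.assoc)
    have s2: "(\<Sum>b\<in>UNIV. A$a$b * uu$b * \<phi> a) = (\<Sum>b\<in>UNIV. A$a$b * uu$b) * \<phi> a"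
      by (rule sum_distrib_right[symmetric])
    have s3: "(\<Sum>b\<in>UNIV. A$a$b * (uu$b * \<phi> b)) = (A *v z)$a" unfolding ub Av_comp ..
    have s4: "(\<Sum>b\<in>UNIV. A$a$b * uu$b) * \<phi> a = rho * z$a"
      unfolding Au_comp using ub[of a] by (simp add: mult.assoc)
    have "(\<Sum>b\<in>UNIV. A$a$b * uu$b * (\<phi> a - \<phi> b)) = rho * z$a - (A *v z)$a"
      unfolding s1 s2 s3 s4 ..
    also have "\<dots> = y$a" unfolding yz by simp
    also have "\<dots> = (if a = j then 1/uu$j else 0) - (if a = k then 1/uu$k else 0)"
      unfolding y_def by (simp add: fv_comp)
    finally show ?thesis .
  qed
  have "D i j + D j k = D i k \<longleftrightarrow> \<phi> i = \<phi> j" unfolding Dik xz by simp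
  also have "\<dots> \<longleftrightarrow> (\<forall>p. is_path E ends p i k \<longrightarrow> j \<in> set p)" by (rule harmonic_geodetic[OF H jk])
  finally show ?thesis .
qed

lemma geodetic: "dLW A i j + dLW A j k = dLW A i k \<longleftrightarrow> (\<forall>p. is_path E ends p i k \<longrightarrow> j \<in> set p)"
proof -
  have n: "real CARD('n) > 0" by simp
  have "dLW A i j + dLW A j k = dLW A i k \<longleftrightarrow> D i j + D j k = D i k"
    unfolding dLW_D using n by (simp add: add_divide_distrib[symmetric])
  then show ?thesis using geodetic_D by simp
qed

end


context lw begin

lemma D_quad: "D i j = lap (S (fv i) - S (fv j)) / 2 + rho * (uu \<bullet> (S (fv i) - S (fv j)))^2"
proof -
  define z where "z = S (fv i) - S (fv j)"
  have "D i j = Nop 0 z \<bullet> z" unfolding D_def z_def S_diff[symmetric] S_Nop ..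
  also have "\<dots> = z \<bullet> Nop 0 z" by (rule inner_commute)
  also have "\<dots> = lap z / 2 + rho * (uu \<bullet> z)^2" unfolding xNx by simp
  finally show ?thesis unfolding z_def .
qed

lemma sq_sqrt: "c \<ge> 0 \<Longrightarrow> (sqrt c * p - sqrt c * q)^2 = c * (p - q)^2"
  by (simp add: right_diff_distrib[symmetric] power_mult_distrib)

lemma euclidean: "\<exists>(m::nat) (x :: 'n \<Rightarrow> nat \<Rightarrow> real). \<forall>i j. dLW A i j = (\<Sum>l<m. (x i l - x j l)\<^sup>2)"
proof -
  define n where "n = real CARD('n)"
  have n: "n > 0" unfolding n_def by simp
  define g where "g v = S (fv v)" for v
  define h where "h v a b = g v $ a / uu$a - g v $ b / uu$b" for v a b
  define c where "c a b = A$a$b * uu$a * uu$b / (2 * n)" for a b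
  have c0: "c a b \<ge> 0" for a b unfolding c_def using A_nonneg[of a b] u_pos[of a] u_pos[of b] n by simp
  define X :: "'n \<Rightarrow> ('n \<times> 'n) option \<Rightarrow> real" where
    "X v ob = (case ob of None \<Rightarrow> sqrt (rho / n) * (uu \<bullet> g v) | Some p \<Rightarrow> sqrt (c (fst p) (snd p)) * h v (fst p) (snd p))" for v ob
  have sumX: "(\<Sum>ob\<in>UNIV. (X i ob - X j ob)^2) = dLW A i j" for i j
  proof -
    have "(\<Sum>ob\<in>UNIV. (X i ob - X j ob)^2) = (X i None - X j None)^2 + (\<Sum>p\<in>UNIV. (X i (Some p) - X j (Some p))^2)"
      unfolding UNIV_option_conv by (simp add: sum.reindex)
    also have "(X i None - X j None)^2 = rho / n * (uu \<bullet> g i - uu \<bullet> g j)^2"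
      unfolding X_def using rho_pos n by (simp add: sq_sqrt)
    also have "(\<Sum>p\<in>UNIV. (X i (Some p) - X j (Some p))^2) = (\<Sum>p\<in>UNIV. c (fst p) (snd p) * (h i (fst p) (snd p) - h j (fst p) (snd p))^2)"
      unfolding X_def by (intro sum.cong refl) (simp add: sq_sqrt c0)
    also have "\<dots> = (\<Sum>a\<in>UNIV. \<Sum>b\<in>UNIV. c a b * (h i a b - h j a b)^2)"
      unfolding sum.cartesian_product UNIV_Times_UNIV by (simp add: split_beta)
    also have "\<dots> = lap (g i - g j) / (2 * n)"
    proof -
      have pt: "c a b * (h i a b - h j a b)^2 = A$a$b * uu$a * uu$b * ((g i - g j)$a/uu$a - (g i - g j)$b/uu$b)^2 / (2*n)" for a b
      proof -
        have "h i a b - h j a b = (g i - g j)$a/uu$a - (g i - g j)$b/uu$b"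
          unfolding h_def by (simp add: diff_divide_distrib)
        then show ?thesis unfolding c_def by simp
      qed
      show ?thesis unfolding pt lap_def by (simp add: sum_divide_distrib)
    qed
    finally have "(\<Sum>ob\<in>UNIV. (X i ob - X j ob)^2) = rho / n * (uu \<bullet> g i - uu \<bullet> g j)^2 + lap (g i - g j) / (2 * n)" .
    moreover have "dLW A i j = (lap (g i - g j) / 2 + rho * (uu \<bullet> (g i - g j))^2) / n"
      unfolding dLW_D D_quad g_def n_def ..
    ultimately have "n * (2 * (\<Sum>ob\<in>UNIV. (X i ob - X j ob)^2)) = n * (2 * dLW A i j)"
      using n by (simp add: inner_diff_right field_simps)
    then show ?thesis using n by simp
  qed
  obtain h0 :: "nat \<Rightarrow> ('n \<times> 'n) option" where h0: "bij_betw h0 {0..<card (UNIV :: ('n \<times> 'n) option set)} UNIV"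
    using ex_bij_betw_nat_finite[of "UNIV :: ('n \<times> 'n) option set"] by auto
  define m where "m = card (UNIV :: ('n \<times> 'n) option set)"
  define x where "x v l = X v (h0 l)" for v l
  have "dLW A i j = (\<Sum>l<m. (x i l - x j l)\<^sup>2)" for i j
  proof -
    have "(\<Sum>l<m. (x i l - x j l)\<^sup>2) = (\<Sum>l\<in>{0..<m}. (X i (h0 l) - X j (h0 l))\<^sup>2)"
      unfolding x_def lessThan_atLeast0 ..
    also have "\<dots> = (\<Sum>ob\<in>UNIV. (X i ob - X j ob)^2)"
      using sum.reindex_bij_betw[OF h0[folded m_def], of "\<lambda>ob. (X i ob - X j ob)^2"] by simp
    finally show ?thesis using sumX by simp
  qed
  then show ?thesis by blast
qed

end


theorem corollary10:
  fixes E :: "'e set" and ends :: "'e \<Rightarrow> 'n::finite set" and w :: "'e \<Rightarrow> real"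
  assumes "wmultigraph E ends w"
    and "connected_graph E ends"
    and "CARD('n) \<ge> 2"
  shows "(\<forall>i j. (lw_expr (wadj E ends w) i j \<longlongrightarrow> dLW (wadj E ends w) i j) at_top)
    \<and> (\<forall>i j k. dLW (wadj E ends w) i j + dLW (wadj E ends w) j k = dLW (wadj E ends w) i k
               \<longleftrightarrow> (\<forall>p. is_path E ends p i k \<longrightarrow> j \<in> set p))
    \<and> (\<exists>(m::nat) (x :: 'n \<Rightarrow> nat \<Rightarrow> real). \<forall>i j.
          dLW (wadj E ends w) i j = (\<Sum>l<m. (x i l - x j l)\<^sup>2))"
proof -
  interpret lw E ends w using assms by unfold_locales
  have 1: "\<forall>i j. (lw_expr (wadj E ends w) i j \<longlongrightarrow> dLW (wadj E ends w) i j) at_top"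
    using lw_expr_tendsto dLW_eq by simp
  have 2: "\<forall>i j k. dLW (wadj E ends w) i j + dLW (wadj E ends w) j k = dLW (wadj E ends w) i k
               \<longleftrightarrow> (\<forall>p. is_path E ends p i k \<longrightarrow> j \<in> set p)"
    using geodetic by blast
  show ?thesis using 1 2 euclidean by blast
qed

end
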